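(* Let $K_+\in\mathfrak{u}_\perp(N)$ in the bosonic case, or $K_+\in\mathcal{I}_{\mathfrak{u}_\perp(N)}$ in the fermionic case. Then $\cosh K_+$ commutes with $J$, and $\overline{\det}(\cosh K_+)=\sqrt{\det(\cosh K_+)}>0$.
   Context: Bosonic case: $\mathfrak{g}=\mathfrak{sp}(2N,\mathbb{R})=\{K:K\Omega=-\Omega K^\intercal\}$ with $\Omega=\begin{pmatrix}0&\mathbb{1}\\-\mathbb{1}&0\end{pmatrix}$, and $J$ a complex structure with $J\Omega J^\intercal=\Omega$, $-J\Omega>0$. Fermionic case: $\mathfrak{g}=\mathfrak{so}(2N,\mathbb{R})$, $J$ orthogonal with $J^2=-\mathbb{1}$. $\mathfrak{u}_\perp(N)=\{K_+\in\mathfrak{g}:K_+J=-JK_+\}$ and $\mathcal{I}_{\mathfrak{u}_\perp(N)}=\{K_+\in\mathfrak{u}_\perp(N):$ all eigenvalues of $K_+$ have modulus $<\pi/2\}$. For $A$ commuting with $J$, written as $\begin{pmatrix}A_1&A_2\\-A_2&A_1\end{pmatrix}$ in a basis where $J=\begin{pmatrix}0&\mathbb{1}\\-\mathbb{1}&0\end{pmatrix}$, $\overline{\det}(A)=\det(A_1+\mathrm{i}A_2)$. *)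

theory Defs
  imports "HOL-Analysis.Analysis"
begin

text \<open>Real 2N x 2N matrices are indexed by the type 'n + 'n (CARD('n) = N):
  Inl i is the i-th coordinate of the first block, Inr i of the second block.\<close>

type_synonym 'n rmat2 = "real ^ ('n + 'n) ^ ('n + 'n)"

text \<open>The standard block matrix ((0, 1), (-1, 0)); used both for Omega and for J in the
  adapted basis.\<close>
definition std_block :: "'n::finite rmat2" where
  "std_block = (\<chi> i j. (case (i, j) of
      (Inl a, Inr b) \<Rightarrow> (if a = b then 1 else 0)
    | (Inr a, Inl b) \<Rightarrow> (if a = b then -1 else 0)
    | _ \<Rightarrow> 0))"

abbreviation Omega :: "'n::finite rmat2" where "Omega \<equiv> std_block"

primrec mpow :: "'a::{comm_ring_1} ^ 'm ^ 'm \<Rightarrow> nat \<Rightarrow> 'a ^ 'm ^ 'm" where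
  "mpow A 0 = mat 1"
| "mpow A (Suc k) = A ** mpow A k"

text \<open>Matrix hyperbolic cosine via its power series.\<close>
definition mcosh :: "real ^ 'm ^ 'm \<Rightarrow> real ^ 'm ^ 'm" where
  "mcosh K = (\<Sum>k. (1 / fact (2 * k)) *\<^sub>R mpow K (2 * k))"

text \<open>Lie algebras.\<close>
definition sp_alg :: "'n::finite rmat2 set" where
  "sp_alg = {K. K ** Omega = - (Omega ** transpose K)}"

definition so_alg :: "(real ^ 'm ^ 'm) set" where
  "so_alg = {K. transpose K = - K}"

text \<open>u_perp(N) inside a Lie algebra g: elements anticommuting with J.\<close>
definition u_perp :: "(real ^ 'm ^ 'm) set \<Rightarrow> real ^ 'm ^ 'm \<Rightarrow> (real ^ 'm ^ 'm) set" where
  "u_perp g J = {K \<in> g. K ** J = - (J ** K)}"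

text \<open>Complex eigenvalues of a real square matrix.\<close>
definition cmat :: "real ^ 'm ^ 'm \<Rightarrow> complex ^ 'm ^ 'm" where
  "cmat A = (\<chi> i j. complex_of_real (A $ i $ j))"

definition eigenvalues :: "real ^ 'm ^ 'm \<Rightarrow> complex set" where
  "eigenvalues A = {c. det (mat c - cmat A) = 0}"

text \<open>I_{u_perp(N)}: elements of u_perp(N) all of whose eigenvalues have modulus < pi/2.\<close>
definition I_u_perp :: "(real ^ 'm ^ 'm) set \<Rightarrow> real ^ 'm ^ 'm \<Rightarrow> (real ^ 'm ^ 'm) set" where
  "I_u_perp g J = {K \<in> u_perp g J. \<forall>c \<in> eigenvalues K. cmod c < pi / 2}"

text \<open>Bosonic complex structure: J^2 = -1, J Omega J^T = Omega, -J Omega positive definite.\<close>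
definition bosonic_cs :: "'n::finite rmat2 \<Rightarrow> bool" where
  "bosonic_cs J \<longleftrightarrow> J ** J = - mat 1 \<and> J ** Omega ** transpose J = Omega \<and>
     (\<forall>v. v \<noteq> 0 \<longrightarrow> v \<bullet> ((- (J ** Omega)) *v v) > 0)"

text \<open>Fermionic complex structure: J orthogonal with J^2 = -1.\<close>
definition fermionic_cs :: "'n::finite rmat2 \<Rightarrow> bool" where
  "fermionic_cs J \<longleftrightarrow> transpose J ** J = mat 1 \<and> J ** J = - mat 1"

text \<open>detbar: for A commuting with J, write A in a basis in which J becomes the standard
  block matrix ((0,1),(-1,0)); then A = ((A1, A2), (-A2, A1)) and detbar A = det (A1 + i A2).
  The basis change S (new coordinates = S old coordinates) is chosen by Hilbert choice.\<close>
definition detbar :: "'n::finite rmat2 \<Rightarrow> 'n rmat2 \<Rightarrow> complex" where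
  "detbar J A = (let S = (SOME S. invertible S \<and> S ** J ** matrix_inv S = std_block);
                     B = S ** A ** matrix_inv S
                 in det ((\<chi> i j. complex_of_real (B $ Inl i $ Inl j)
                                 + \<i> * complex_of_real (B $ Inl i $ Inr j)) :: complex ^ 'n ^ 'n))"

end

theory Submission
  imports Defs
begin

(* ---- part 1 ---- *)

lemma det_embed:
  fixes e :: "'n::finite \<Rightarrow> 'm::finite" and A :: "'a::comm_ring_1^'m^'m" and X :: "'a^'n^'n"
  assumes inj: "inj e"
    and hX: "\<And>i j. A$(e i)$(e j) = X$i$j"
    and hout: "\<And>i j. i \<notin> range e \<Longrightarrow> A$i$j = (if i = j then 1 else 0)"
    and hmix: "\<And>i j. i \<in> range e \<Longrightarrow> j \<notin> range e \<Longrightarrow> A$i$j = 0"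
  shows "det A = det X"
proof -
  let ?R = "range e"
  let ?f = "\<lambda>p. of_int (sign p) * prod (\<lambda>i. A$i$p i) (UNIV :: 'm set)"
  have zero: "?f p = 0" if p: "p permutes (UNIV::'m set)" and np: "\<not> p permutes ?R" for p
  proof -
    have "\<exists>i. i \<notin> ?R \<and> p i \<noteq> i"
    proof (rule ccontr)
      assume "\<not> ?thesis"
      then have "\<forall>x. x \<notin> ?R \<longrightarrow> p x = x" by blast
      moreover have "\<forall>y. \<exists>!x. p x = y" using p by (simp add: permutes_def)
      ultimately have "p permutes ?R" by (simp add: permutes_def)
      with np show False by simp
    qed
    then obtain i where i: "i \<notin> ?R" "p i \<noteq> i" by blast
    have "A$i$p i = 0" using hout[OF i(1), of "p i"] i(2) by simp
    then have "prod (\<lambda>i. A$i$p i) (UNIV :: 'm set) = 0"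
      by (intro prod_zero) auto
    then show ?thesis by simp
  qed
  have mp: "map_permutation UNIV e q x = (if x \<in> ?R then e (q (inv e x)) else x)" for q x
    by (simp add: map_permutation_def restrict_id_def)
  have Tq: "map_permutation UNIV e q permutes ?R" if "q permutes UNIV" for q
    by (rule map_permutation_permutes[OF _ that]) (use inj in \<open>simp add: inj_on_imp_bij_betw\<close>)
  have Sp: "inv e \<circ> p \<circ> e permutes UNIV" if p: "p permutes ?R" for p
  proof (rule bij_imp_permutes)
    have pR: "p x \<in> ?R" if "x \<in> ?R" for x using permutes_in_image[OF p] that by simp
    have ie: "e (inv e y) = y" if "y \<in> ?R" for y using that by (auto simp: f_inv_into_f)
    show "bij_betw (inv e \<circ> p \<circ> e) UNIV UNIV"
      unfolding bij_betw_def
    proof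
      show "inj_on (inv e \<circ> p \<circ> e) UNIV"
      proof (rule inj_onI)
        fix x y assume "(inv e \<circ> p \<circ> e) x = (inv e \<circ> p \<circ> e) y"
        then have "e (inv e (p (e x))) = e (inv e (p (e y)))" by simp
        then have "p (e x) = p (e y)" using ie pR by simp
        then have "e x = e y" using permutes_inj[OF p] by (simp add: inj_eq)
        then show "x = y" using inj by (simp add: inj_eq)
      qed
      have "y \<in> range (inv e \<circ> p \<circ> e)" for y
      proof -
        obtain x where x: "p x = e y" using permutes_surj[OF p] by (metis surjD)
        have "x \<in> ?R" using x pR permutes_not_in[OF p] by (metis rangeI)
        then obtain z where "x = e z" by auto
        then have "(inv e \<circ> p \<circ> e) z = y" using x inj by (simp add: inv_f_f)
        then show ?thesis by (metis rangeI)
      qed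
      then show "range (inv e \<circ> p \<circ> e) = UNIV" by auto
    qed
  qed simp
  have bk: "map_permutation UNIV e (inv e \<circ> p \<circ> e) = p" if p: "p permutes ?R" for p
  proof
    fix x
    have pR: "p x \<in> ?R" if "x \<in> ?R" for x using permutes_in_image[OF p] that by simp
    show "map_permutation UNIV e (inv e \<circ> p \<circ> e) x = p x"
      using pR[of x] permutes_not_in[OF p, of x] by (auto simp: mp f_inv_into_f)
  qed
  have "det A = sum ?f {p. p permutes ?R}"
    unfolding det_def
    by (rule sum.mono_neutral_right) (auto intro: zero permutes_subset)
  also have "\<dots> = sum (\<lambda>q. of_int (sign q) * prod (\<lambda>i. X$i$q i) (UNIV :: 'n set)) {q. q permutes (UNIV::'n set)}"
  proof (rule sum.reindex_bij_witness[of _ "\<lambda>q. map_permutation UNIV e q" "\<lambda>p. inv e \<circ> p \<circ> e"])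
    fix p assume p: "p \<in> {p. p permutes ?R}"
    show "map_permutation UNIV e (inv e \<circ> p \<circ> e) = p" using bk p by simp
    show "inv e \<circ> p \<circ> e \<in> {q. q permutes UNIV}" using Sp p by simp
  next
    fix q :: "'n \<Rightarrow> 'n" assume q: "q \<in> {q. q permutes UNIV}"
    show "(inv e \<circ> map_permutation UNIV e q \<circ> e) = q"
      using inj by (auto simp: mp fun_eq_iff inv_f_f)
    show "map_permutation UNIV e q \<in> {p. p permutes ?R}" using Tq q by simp
  next
    fix p assume p: "p \<in> {p. p permutes ?R}"
    define q where "q = inv e \<circ> p \<circ> e"
    have q: "q permutes UNIV" using Sp p q_def by simp
    have pq: "p = map_permutation UNIV e q" using bk p q_def by simp
    have "prod (\<lambda>i. A$i$(map_permutation UNIV e q) i) UNIV = prod (\<lambda>i. A$i$(map_permutation UNIV e q) i) ?R"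
      by (rule prod.mono_neutral_right) (auto simp: mp hout)
    also have "\<dots> = prod (\<lambda>k. X$k$q k) UNIV"
      using inj by (simp add: prod.reindex mp hX inv_f_f)
    finally show "of_int (sign q) * prod (\<lambda>i. X$i$q i) UNIV = ?f p"
      using sign_map_permutation[of e UNIV q] q inj pq by simp
  qed
  also have "\<dots> = det X" unfolding det_def ..
  finally show ?thesis .
qed

(* ---- part 2 ---- *)

lemma sum_UNIV_Plus: "(\<Sum>k\<in>(UNIV::('a::finite+'b::finite) set). f k) = (\<Sum>i\<in>UNIV. f (Inl i)) + (\<Sum>i\<in>UNIV. f (Inr i))"
  using sum.Plus[of "UNIV::'a set" "UNIV::'b set" f] by (simp add: o_def)

lemma std_block_simps[simp]:
  "std_block $ Inl a $ Inl b = 0" "std_block $ Inl a $ Inr b = (if a = b then 1 else 0)"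
  "std_block $ Inr a $ Inl b = (if a = b then -1 else 0)" "std_block $ Inr a $ Inr b = 0"
  by (simp_all add: std_block_def)

lemma if_times_left: "(if P then 1 else 0) * (c::'a::ring_1) = (if P then c else 0)"
  "(if P then -1 else 0) * (c::'a::ring_1) = (if P then -c else 0)"
  by simp_all

lemma mult_std_block_right:
  fixes B :: "'n::finite rmat2"
  shows "(B ** std_block) $ x $ Inl b = - B $ x $ Inr b" "(B ** std_block) $ x $ Inr b = B $ x $ Inl b"
  by (simp_all add: matrix_matrix_mult_def sum_UNIV_Plus if_distrib cong: if_cong)

lemma mult_std_block_left:
  fixes B :: "'n::finite rmat2"
  shows "(std_block ** B) $ Inl a $ y = B $ Inr a $ y" "(std_block ** B) $ Inr a $ y = - B $ Inl a $ y"
  by (simp_all add: matrix_matrix_mult_def sum_UNIV_Plus if_times_left)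

definition commE :: "'n::finite rmat2 \<Rightarrow> bool" where
  "commE B \<longleftrightarrow> (\<forall>i j. B$Inr i$Inr j = B$Inl i$Inl j \<and> B$Inr i$Inl j = - B$Inl i$Inr j)"

lemma commE_iff: "B ** std_block = std_block ** B \<longleftrightarrow> commE B"
proof
  assume h: "B ** std_block = std_block ** B"
  have "(B ** std_block) $ x $ y = (std_block ** B) $ x $ y" for x y using h by simp
  then show "commE B" unfolding commE_def
    by (metis mult_std_block_left mult_std_block_right minus_equation_iff)
next
  assume h: "commE B"
  show "B ** std_block = std_block ** B"
  proof (rule vec_eq_iff[THEN iffD2], rule allI, rule vec_eq_iff[THEN iffD2], rule allI)
    fix x y show "(B ** std_block) $ x $ y = (std_block ** B) $ x $ y"
      using h unfolding commE_def
      by (cases x; cases y) (simp_all add: mult_std_block_left mult_std_block_right)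
  qed
qed

definition cf :: "'n::finite rmat2 \<Rightarrow> complex^'n^'n" where
  "cf B = (\<chi> i j. complex_of_real (B$Inl i$Inl j) + \<i> * complex_of_real (B$Inl i$Inr j))"

lemma cf_nth: "cf B $ i $ j = complex_of_real (B$Inl i$Inl j) + \<i> * complex_of_real (B$Inl i$Inr j)"
  by (simp add: cf_def)

lemma cf_mult:
  assumes "commE B"
  shows "cf (A ** B) = cf A ** cf B"
proof -
  have hB: "B$Inr i$Inr j = B$Inl i$Inl j" "B$Inr i$Inl j = - B$Inl i$Inr j" for i j
    using assms by (auto simp: commE_def)
  show ?thesis
    by (simp add: vec_eq_iff cf_nth matrix_matrix_mult_def sum_UNIV_Plus hB sum.distrib
       algebra_simps of_real_sum sum_distrib_left sum_subtractf sum_negf)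
qed

lemma cf_mat1: "cf (mat 1 :: 'n::finite rmat2) = mat 1"
  by (simp add: vec_eq_iff cf_nth mat_def)

lemma cf_add: "cf (A + B) = cf A + cf B"
  by (simp add: vec_eq_iff cf_nth algebra_simps)

lemma cf_scaleR: "cf (c *\<^sub>R A) = c *\<^sub>R cf A"
  by (simp add: vec_eq_iff cf_nth) (simp add: scaleR_conv_of_real algebra_simps)

lemma cf_transpose:
  assumes "commE B"
  shows "cf (transpose B) = (\<chi> i j. cnj (cf B $ j $ i))"
  using assms by (simp add: vec_eq_iff cf_nth transpose_def commE_def)

(* ---- part 3 ---- *)

lemma det_cmat: "det (cmat A) = complex_of_real (det A)"
  by (simp add: det_def cmat_def of_real_sum of_real_mult of_real_prod)

lemma det_cnj: "det (\<chi> i j. cnj (X$i$j)) = cnj (det X)"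
  by (simp add: det_def)

lemma if_times_gen: "(if P then c else 0) * (x::'a::mult_zero) = (if P then c * x else 0)"
  "x * (if P then c else 0) = (if P then x * c else 0)"
  by simp_all

lemma det_cf:
  fixes B :: "'n::finite rmat2"
  assumes "commE B"
  shows "complex_of_real (det B) = cnj (det (cf B)) * det (cf B)"
proof -
  have hB: "B$Inr i$Inr j = B$Inl i$Inl j" "B$Inr i$Inl j = - B$Inl i$Inr j" for i j
    using assms by (auto simp: commE_def)
  define a where "a = cf B"
  define U :: "complex^('n+'n)^('n+'n)" where "U = (\<chi> x y. case (x, y) of
     (Inl p, Inl q) \<Rightarrow> (if p = q then 1 else 0) | (Inl p, Inr q) \<Rightarrow> (if p = q then \<i> else 0)
   | (Inr p, Inl q) \<Rightarrow> (if p = q then 1 else 0) | (Inr p, Inr q) \<Rightarrow> (if p = q then -\<i> else 0))"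
  define V :: "complex^('n+'n)^('n+'n)" where "V = (\<chi> x y. case (x, y) of
     (Inl p, Inl q) \<Rightarrow> (if p = q then 1/2 else 0) | (Inl p, Inr q) \<Rightarrow> (if p = q then 1/2 else 0)
   | (Inr p, Inl q) \<Rightarrow> (if p = q then -\<i>/2 else 0) | (Inr p, Inr q) \<Rightarrow> (if p = q then \<i>/2 else 0))"
  define D1 :: "complex^('n+'n)^('n+'n)" where "D1 = (\<chi> x y. case (x, y) of
     (Inl p, Inl q) \<Rightarrow> cnj (a$p$q) | (Inr p, Inr q) \<Rightarrow> (if p = q then 1 else 0) | _ \<Rightarrow> 0)"
  define D2 :: "complex^('n+'n)^('n+'n)" where "D2 = (\<chi> x y. case (x, y) of
     (Inl p, Inl q) \<Rightarrow> (if p = q then 1 else 0) | (Inr p, Inr q) \<Rightarrow> a$p$q | _ \<Rightarrow> 0)"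
  have UV: "U ** V = mat 1"
  proof (rule vec_eq_iff[THEN iffD2], rule allI, rule vec_eq_iff[THEN iffD2], rule allI)
    fix x y show "(U ** V) $ x $ y = mat 1 $ x $ y"
      by (cases x; cases y) (simp_all add: U_def V_def matrix_matrix_mult_def sum_UNIV_Plus mat_def if_times_gen)
  qed
  have UC: "U ** cmat B = (D1 ** D2) ** U"
  proof (rule vec_eq_iff[THEN iffD2], rule allI, rule vec_eq_iff[THEN iffD2], rule allI)
    fix x y show "(U ** cmat B) $ x $ y = ((D1 ** D2) ** U) $ x $ y"
      by (cases x; cases y) (simp_all add: U_def D1_def D2_def a_def cf_nth cmat_def hB
            matrix_matrix_mult_def sum_UNIV_Plus if_times_gen sum.distrib sum_subtractf algebra_simps)
  qed
  have dD1: "det D1 = det (\<chi> p q. cnj (a$p$q))"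
    by (rule det_embed[of Inl]) (auto simp: D1_def split: sum.splits)
  have dD2: "det D2 = det a"
    by (rule det_embed[of Inr]) (auto simp: D2_def split: sum.splits)
  have "det U * det V = 1" using UV by (simp flip: det_mul)
  then have nz: "det U \<noteq> 0" by auto
  have "det U * det (cmat B) = det D1 * det D2 * det U"
    using arg_cong[OF UC, of det] by (simp add: det_mul)
  then have "det (cmat B) = det D1 * det D2" using nz by (simp add: mult.commute)
  then show ?thesis by (simp add: det_cmat dD1 dD2 det_cnj a_def)
qed

lemma det_cf_real:
  fixes B :: "'n::finite rmat2"
  assumes "commE B"
  shows "det B = (cmod (det (cf B)))\<^sup>2"
proof -
  have "complex_of_real (det B) = complex_of_real ((cmod (det (cf B)))\<^sup>2)"
    using det_cf[OF assms] complex_norm_square[of "det (cf B)"] by (simp add: mult.commute)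
  then show ?thesis by (metis of_real_eq_iff of_real_power)
qed

(* ---- part 4 ---- *)

lemma card_sum_self: "CARD('n::finite + 'n) = 2 * CARD('n)"
  using card_Plus[of "UNIV::'n set" "UNIV::'n set"] by simp

lemma neg_matrix_vector: "(- A) *v (v::'a::ring_1^'m) = - (A *v v)"
  by (simp add: vec_eq_iff matrix_vector_mult_def sum_negf)

lemma neg_mat1_vector: "(- mat 1) *v (v::'a::ring_1^'m) = - v"
  by (simp add: neg_matrix_vector)

lemma exists_basis_step:
  fixes J :: "'n::finite rmat2"
  assumes JJ: "J ** J = - mat 1"
  assumes X: "finite X" "independent (X \<union> (\<lambda>v. J *v v) ` X)" "X \<inter> (\<lambda>v. J *v v) ` X = {}"
    and k: "card X < CARD('n)"
  shows "\<exists>X'. finite X' \<and> independent (X' \<union> (\<lambda>v. J *v v) ` X') \<and> X' \<inter> (\<lambda>v. J *v v) ` X' = {}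
          \<and> card X' = Suc (card X)"
proof -
  let ?J = "\<lambda>v. J *v v"
  let ?Y = "X \<union> ?J ` X"
  have JJv: "?J (?J v) = - v" for v using JJ by (simp add: matrix_vector_mul_assoc neg_mat1_vector)
  have injJ: "inj ?J"
  proof (rule inj_onI)
    fix x y assume "?J x = ?J y"
    then have "?J (?J x) = ?J (?J y)" by simp
    then show "x = y" using JJv by simp
  qed
  have linJ: "linear ?J" by (rule matrix_vector_mul_linear)
  have cardY: "card ?Y = 2 * card X"
  proof -
    have "card ?Y = card X + card (?J ` X)" using X by (simp add: card_Un_disjoint)
    also have "card (?J ` X) = card X" using injJ by (simp add: card_image inj_on_subset)
    finally show ?thesis by simp
  qed
  have "span ?Y \<noteq> UNIV"
  proof
    assume "span ?Y = UNIV"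
    have "card ?Y = dim (span ?Y)" using dim_span_eq_card_independent[OF X(2)] by simp
    then have "card ?Y = dim (UNIV :: (real^('n+'n)) set)" using \<open>span ?Y = UNIV\<close> by simp
    also have "\<dots> = 2 * CARD('n)" by (simp add: card_sum_self)
    finally show False using cardY k by simp
  qed
  then obtain v where v: "v \<notin> span ?Y" by blast
  have Jspan: "?J y \<in> span ?Y" if "y \<in> span ?Y" for y
  proof -
    have "?J ` ?Y \<subseteq> span ?Y"
    proof
      fix z assume "z \<in> ?J ` ?Y"
      then obtain y where y: "y \<in> ?Y" "z = ?J y" by blast
      show "z \<in> span ?Y"
      proof (cases "y \<in> X")
        case True then have "z \<in> ?Y" using y by blast
        then show ?thesis by (rule span_base)
      next
        case False then obtain x where "x \<in> X" "y = ?J x" using y by blast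
        then have "z = - x" using y JJv by simp
        have "x \<in> span ?Y" using \<open>x \<in> X\<close> by (intro span_base) blast
        then show ?thesis using \<open>z = - x\<close> by (simp add: span_neg)
      qed
    qed
    then have "span (?J ` ?Y) \<subseteq> span ?Y" by (simp add: span_minimal)
    then have "?J ` span ?Y \<subseteq> span ?Y" using span_linear_image[OF linJ, of ?Y] by simp
    then show ?thesis using that by blast
  qed
  have Jv: "?J v \<notin> span ?Y"
  proof
    assume "?J v \<in> span ?Y"
    then have "?J (?J v) \<in> span ?Y" by (rule Jspan)
    then have "- v \<in> span ?Y" by (simp add: JJv)
    then have "- (- v) \<in> span ?Y" by (rule span_neg)
    then show False using v by simp
  qed
  have v2: "v \<notin> span (insert (?J v) ?Y)"
  proof
    assume "v \<in> span (insert (?J v) ?Y)"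
    then obtain c where c: "v - c *\<^sub>R ?J v \<in> span ?Y" by (auto simp: span_breakdown_eq)
    then have "?J (v - c *\<^sub>R ?J v) \<in> span ?Y" by (rule Jspan)
    then have c2: "?J v + c *\<^sub>R v \<in> span ?Y"
      using linJ by (simp add: linear_diff linear_scale JJv)
    have "(v - c *\<^sub>R ?J v) + c *\<^sub>R (?J v + c *\<^sub>R v) \<in> span ?Y"
      by (rule span_add[OF c span_scale[OF c2]])
    then have "(1 + c^2) *\<^sub>R v \<in> span ?Y"
      by (simp add: algebra_simps power2_eq_square)
    then have "(1 / (1 + c^2)) *\<^sub>R ((1 + c^2) *\<^sub>R v) \<in> span ?Y" by (rule span_scale)
    moreover have "1 + c^2 \<noteq> 0" using zero_le_power2[of c] by linarith
    ultimately have "v \<in> span ?Y" by simp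
    then show False using v by simp
  qed
  define X' where "X' = insert v X"
  have vY: "v \<notin> ?Y"
  proof
    assume "v \<in> ?Y" then have "v \<in> span ?Y" by (rule span_base)
    with v show False by simp
  qed
  have JvY: "?J v \<notin> ?Y"
  proof
    assume "?J v \<in> ?Y" then have "?J v \<in> span ?Y" by (rule span_base)
    with Jv show False by simp
  qed
  have vJv: "v \<noteq> ?J v"
  proof
    assume "v = ?J v"
    then have "v \<in> insert (?J v) ?Y" by simp
    then have "v \<in> span (insert (?J v) ?Y)" by (rule span_base)
    with v2 show False by simp
  qed
  have JX': "?J ` X' = insert (?J v) (?J ` X)" by (simp add: X'_def)
  have Y': "X' \<union> ?J ` X' = insert v (insert (?J v) ?Y)" unfolding JX' X'_def by (simp add: insert_commute)
  show ?thesis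
  proof (intro exI[of _ X'] conjI)
    show "finite X'" using X by (simp add: X'_def)
    have "independent (insert (?J v) ?Y)" by (rule independent_insertI[OF Jv X(2)])
    then show "independent (X' \<union> ?J ` X')" unfolding Y' by (rule independent_insertI[OF v2])
    show "X' \<inter> ?J ` X' = {}"
    proof (rule equals0I)
      fix z assume z: "z \<in> X' \<inter> ?J ` X'"
      then have z1: "z = v \<or> z \<in> X" unfolding X'_def by simp
      have z2: "z = ?J v \<or> z \<in> ?J ` X" using z unfolding JX' by simp
      have "z \<notin> X \<inter> ?J ` X" using X(3) by simp
      then show False using z1 z2 vY JvY vJv by auto
    qed
    show "card X' = Suc (card X)" using X vY by (simp add: X'_def)
  qed
qed

(* ---- part 5 ---- *)

lemma exists_good:
  fixes J :: "'n::finite rmat2"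
  assumes JJ: "J ** J = - mat 1"
  shows "k \<le> CARD('n) \<Longrightarrow> \<exists>X. finite X \<and> independent (X \<union> (\<lambda>v. J *v v) ` X) \<and> X \<inter> (\<lambda>v. J *v v) ` X = {}
          \<and> card X = k"
proof (induction k)
  case 0
  show ?case by (intro exI[of _ "{}"]) (simp add: independent_empty)
next
  case (Suc k)
  then obtain X where X: "finite X" "independent (X \<union> (\<lambda>v. J *v v) ` X)" "X \<inter> (\<lambda>v. J *v v) ` X = {}" "card X = k"
    by auto
  then show ?case using exists_basis_step[OF JJ X(1-3)] Suc.prems by auto
qed

lemma invertible_matrix_inv:
  fixes P :: "real^'m^'m"
  assumes "invertible P"
  shows "P ** matrix_inv P = mat 1" "matrix_inv P ** P = mat 1"
  using assms someI_ex[of "\<lambda>A'. P ** A' = mat 1 \<and> A' ** P = mat 1"]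
  by (auto simp: invertible_def matrix_inv_def)

lemma matrix_inv_unique:
  fixes P Q :: "real^'m^'m"
  assumes "P ** Q = mat 1" "Q ** P = mat 1"
  shows "matrix_inv P = Q"
proof -
  have inv: "invertible P" using assms by (auto simp: invertible_def)
  have "matrix_inv P = (Q ** P) ** matrix_inv P" using assms by simp
  also have "\<dots> = Q ** (P ** matrix_inv P)" by (simp add: matrix_mul_assoc)
  also have "\<dots> = Q" using invertible_matrix_inv[OF inv] by simp
  finally show ?thesis .
qed

lemma exists_S:
  fixes J :: "'n::finite rmat2"
  assumes JJ: "J ** J = - mat 1"
  shows "\<exists>S. invertible S \<and> S ** J ** matrix_inv S = (std_block :: 'n rmat2)"
proof -
  let ?J = "\<lambda>v. J *v v"
  obtain X where X: "finite X" "independent (X \<union> ?J ` X)" "X \<inter> ?J ` X = {}" "card X = CARD('n)"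
    using exists_good[OF JJ, of "CARD('n)"] by auto
  have JJv: "?J (?J v) = - v" for v using JJ by (simp add: matrix_vector_mul_assoc neg_mat1_vector)
  have injJ: "inj ?J"
  proof (rule inj_onI)
    fix x y assume "?J x = ?J y"
    then have "?J (?J x) = ?J (?J y)" by simp
    then show "x = y" using JJv by simp
  qed
  obtain f where f: "bij_betw f (UNIV::'n set) X"
    using finite_same_card_bij[of "UNIV::'n set" X] X by auto
  define g :: "'n + 'n \<Rightarrow> real^('n+'n)" where "g c = (case c of Inl j \<Rightarrow> ?J (f j) | Inr j \<Rightarrow> f j)" for c
  define P :: "'n rmat2" where "P = (\<chi> r c. g c $ r)"
  have fX: "f j \<in> X" for j using f by (auto simp: bij_betw_def)
  have finj: "f i = f j \<Longrightarrow> i = j" for i j using f by (auto simp: bij_betw_def inj_on_def)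
  have ginj: "inj g"
  proof (rule inj_onI)
    fix a b assume gab: "g a = g b"
    show "a = b"
    proof (cases a; cases b)
      fix i j assume ab: "a = Inl i" "b = Inl j"
      then have "?J (f i) = ?J (f j)" using gab by (simp add: g_def)
      then have "f i = f j" using injJ by (simp add: inj_eq)
      then show ?thesis using ab finj by simp
    next
      fix i j assume ab: "a = Inl i" "b = Inr j"
      then have "?J (f i) = f j" using gab by (simp add: g_def)
      then have "f j \<in> ?J ` X" using fX[of i] by (metis image_eqI)
      then have "f j \<in> X \<inter> ?J ` X" using fX by auto
      then show ?thesis using X(3) by simp
    next
      fix i j assume ab: "a = Inr i" "b = Inl j"
      then have "?J (f j) = f i" using gab by (simp add: g_def)
      then have "f i \<in> ?J ` X" using fX[of j] by (metis image_eqI)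
      then have "f i \<in> X \<inter> ?J ` X" using fX by auto
      then show ?thesis using X(3) by simp
    next
      fix i j assume ab: "a = Inr i" "b = Inr j"
      then have "f i = f j" using gab by (simp add: g_def)
      then show ?thesis using ab finj by simp
    qed
  qed
  have grange: "range g = X \<union> ?J ` X"
  proof -
    have "range f = X" using f by (simp add: bij_betw_def)
    have "range g = g ` range Inl \<union> g ` range Inr" by (metis UNIV_sum image_Un)
    also have "g ` range Inl = ?J ` range f" by (simp add: image_image g_def)
    also have "g ` range Inr = range f" by (simp add: image_image g_def)
    finally show ?thesis using \<open>range f = X\<close> by blast
  qed
  have Pv: "P *v x = (\<Sum>c\<in>UNIV. x $ c *\<^sub>R g c)" for x
    by (simp add: vec_eq_iff P_def matrix_vector_mult_def sum_component mult.commute)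
  have ker: "\<forall>x. P *v x = 0 \<longrightarrow> x = 0"
  proof (intro allI impI)
    fix x assume "P *v x = 0"
    then have "(\<Sum>c\<in>UNIV. x $ c *\<^sub>R g c) = 0" by (simp add: Pv)
    then have "(\<Sum>y\<in>range g. (x $ (inv g y)) *\<^sub>R y) = 0"
      using ginj by (simp add: sum.reindex inv_f_f)
    moreover have H: "\<forall>c. (\<Sum>v\<in>range g. c v *\<^sub>R v) = 0 \<longrightarrow> (\<forall>v\<in>range g. c v = 0)"
      using X(2) unfolding grange[symmetric] eucl.independent_explicit by blast
    ultimately have "\<forall>y\<in>range g. x $ (inv g y) = 0"
      using spec[OF H, of "\<lambda>y. x $ (inv g y)"] by simp
    then show "x = 0" using ginj by (simp add: vec_eq_iff inv_f_f)
  qed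
  then obtain B where B: "B ** P = mat 1" using matrix_left_invertible_ker by blast
  then have B2: "P ** B = mat 1" using matrix_left_right_inverse by blast
  have JP: "J ** P = P ** std_block"
  proof (rule vec_eq_iff[THEN iffD2], rule allI, rule vec_eq_iff[THEN iffD2], rule allI)
    fix r c
    have "(J ** P) $ r $ c = (J *v g c) $ r"
      by (simp add: matrix_matrix_mult_def matrix_vector_mult_def P_def)
    then show "(J ** P) $ r $ c = (P ** std_block) $ r $ c"
      by (cases c) (simp_all add: mult_std_block_right g_def JJv P_def)
  qed
  define S where "S = B"
  have iS: "matrix_inv S = P" using matrix_inv_unique[of B P] B B2 by (simp add: S_def)
  have i1: "invertible S" using B B2 by (auto simp: invertible_def S_def)
  have "S ** J ** matrix_inv S = S ** (J ** P)" by (simp add: iS matrix_mul_assoc)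
  also have "\<dots> = (S ** P) ** std_block" by (simp add: JP matrix_mul_assoc)
  also have "\<dots> = std_block" using B by (simp add: S_def)
  finally show ?thesis using i1 by blast
qed

(* ---- part 6 ---- *)

lemma ker_det_nz:
  fixes A :: "real^'m^'m"
  assumes "\<forall>x. A *v x = 0 \<longrightarrow> x = 0"
  shows "det A \<noteq> 0"
proof -
  obtain B where "B ** A = mat 1" using assms matrix_left_invertible_ker by blast
  then have "invertible A" using matrix_left_right_inverse by (auto simp: invertible_def)
  then show ?thesis by (simp add: invertible_det_nz)
qed

lemma pd_det_nz:
  fixes A :: "real^'m^'m"
  assumes "\<forall>v. v \<noteq> 0 \<longrightarrow> v \<bullet> (A *v v) > 0"
  shows "det A \<noteq> 0"
  using assms by (intro ker_det_nz) (metis inner_zero_right less_irrefl)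

lemma transpose_std_block: "transpose (std_block :: 'n::finite rmat2) = - std_block"
  by (simp add: vec_eq_iff transpose_def std_block_def split: sum.splits)

lemma std_block_sq: "(std_block :: 'n::finite rmat2) ** std_block = - mat 1"
proof (rule vec_eq_iff[THEN iffD2], rule allI, rule vec_eq_iff[THEN iffD2], rule allI)
  fix x y show "((std_block :: 'n::finite rmat2) ** std_block) $ x $ y = (- mat 1 :: 'n rmat2) $ x $ y"
    by (cases x; cases y) (simp_all add: mult_std_block_right mat_def)
qed

lemma det_similar:
  fixes S X :: "real^'m^'m"
  assumes "Si ** S = mat 1"
  shows "det (S ** X ** Si) = det X"
proof -
  have "det (S ** X ** Si) = det S * det X * det Si" by (simp add: det_mul)
  also have "\<dots> = det X * (det Si * det S)" by (simp add: algebra_simps)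
  also have "det Si * det S = 1" using assms by (metis det_I det_mul)
  finally show ?thesis by simp
qed

lemma det_ctrans: "det (\<chi> i j. cnj (M $ j $ i)) = cnj (det (M :: complex^'n^'n))"
proof -
  have "(\<chi> i j. cnj (M $ j $ i)) = (\<chi> i j. cnj (transpose M $ i $ j))" by (simp add: transpose_def)
  then show ?thesis by (simp add: det_cnj)
qed

lemma det_cf_of_real:
  fixes B G :: "'n::finite rmat2"
  assumes cB: "commE B" and cG: "commE G" and dG: "det G \<noteq> 0"
    and h: "G ** B = transpose B ** G"
  shows "cnj (det (cf B)) = det (cf B)"
proof -
  have "cf (G ** B) = cf G ** cf B" by (rule cf_mult[OF cB])
  moreover have "cf (transpose B ** G) = cf (transpose B) ** cf G" by (rule cf_mult[OF cG])
  ultimately have "cf G ** cf B = (\<chi> i j. cnj (cf B $ j $ i)) ** cf G" using h cf_transpose[OF cB] by simp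
  then have "det (cf G) * det (cf B) = cnj (det (cf B)) * det (cf G)"
    by (metis det_mul det_ctrans)
  moreover have "det (cf G) \<noteq> 0" using det_cf_real[OF cG] dG by auto
  ultimately show ?thesis by (simp add: mult.commute)
qed

lemma cont_det_path:
  fixes c :: "complex^'n^'n"
  shows "continuous_on UNIV (\<lambda>t::real. det ((1 - t) *\<^sub>R mat 1 + t *\<^sub>R c))"
  unfolding det_def
  by (intro continuous_intros continuous_on_prod)

(* ---- part 7 ---- *)

lemma neg_matrix_mult_left: "(- A) ** (B::'a::ring_1^'n^'m) = - (A ** B)"
  by (simp add: vec_eq_iff matrix_matrix_mult_def sum_negf)

lemma neg_matrix_mult_right: "(A::'a::ring_1^'n^'m) ** (- B) = - (A ** B)"
  by (simp add: vec_eq_iff matrix_matrix_mult_def sum_negf)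

lemma cnj_eq_real:
  assumes "cnj z = z" shows "z = complex_of_real (Re z)"
proof -
  have "Im z = 0" using arg_cong[OF assms, of Im] by simp
  then show ?thesis by (simp add: complex_eq_iff)
qed

lemma transpose_add: "transpose (A + B) = transpose A + transpose (B::'a::semiring_1^'n^'m)"
  by (simp add: vec_eq_iff transpose_def)

lemma matrix_add_rdistrib: "(A + B) ** (C::'a::semiring_1^'n^'m) = A ** C + B ** C"
  by (simp add: vec_eq_iff matrix_matrix_mult_def sum.distrib distrib_right)

lemma core:
  fixes J G C :: "'n::finite rmat2"
  assumes JJ: "J ** J = - mat 1"
    and Gsym: "transpose G = G" and Gpd: "\<forall>v. v \<noteq> 0 \<longrightarrow> v \<bullet> (G *v v) > 0"
    and JGJ: "transpose J ** G ** J = G"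
    and CJ: "C ** J = J ** C"
    and GCsym: "transpose (G ** C) = G ** C"
    and GCpd: "\<forall>v. v \<noteq> 0 \<longrightarrow> v \<bullet> ((G ** C) *v v) > 0"
  shows "\<exists>r>0. detbar J C = complex_of_real r \<and> det C = r^2"
proof -
  define S where "S = (SOME S. invertible S \<and> S ** J ** matrix_inv S = (std_block::'n rmat2))"
  have S: "invertible S \<and> S ** J ** matrix_inv S = (std_block::'n rmat2)"
    unfolding S_def by (rule someI_ex[OF exists_S[OF JJ]])
  define Si where "Si = matrix_inv S"
  have SSi: "S ** Si = mat 1" "Si ** S = mat 1" using invertible_matrix_inv S Si_def by auto
  have SSi'1: "S ** (Si ** Z) = Z" for Z :: "'n rmat2"
    by (metis SSi(1) matrix_mul_assoc matrix_mul_lid)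
  have SSi'2: "Si ** (S ** Z) = Z" for Z :: "'n rmat2"
    by (metis SSi(2) matrix_mul_assoc matrix_mul_lid)
  note SSi' = SSi'1 SSi'2
  have E: "S ** J ** Si = std_block" using S Si_def by simp
  define tr where "tr X = S ** X ** Si" for X :: "'n rmat2"
  have tr_mult: "tr (X ** Y) = tr X ** tr Y" for X Y
    by (simp add: tr_def matrix_mul_assoc[symmetric] SSi')
  have trJ: "tr J = std_block" using E by (simp add: tr_def)
  have detbar_eq: "detbar J C = det (cf (tr C))"
    by (simp add: detbar_def Let_def cf_def tr_def Si_def flip: S_def)
  \<comment> \<open>the transformed metric\<close>
  define G' where "G' = transpose Si ** G ** Si"
  have trT: "transpose S ** transpose Si = mat 1"
    using SSi by (metis matrix_transpose_mul transpose_mat)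
  have trT': "transpose S ** (transpose Si ** Z) = Z" for Z :: "'n rmat2"
    by (metis trT matrix_mul_assoc matrix_mul_lid)
  have EG: "transpose std_block ** G' ** std_block = G'"
  proof -
    have "transpose std_block ** G' ** std_block
        = transpose Si ** (transpose J ** G ** J) ** Si"
      unfolding E[symmetric] G'_def
      by (simp add: matrix_transpose_mul matrix_mul_assoc[symmetric] SSi' trT')
    then show ?thesis using JGJ by (simp add: G'_def)
  qed
  have cG': "commE G'"
  proof -
    let ?E = "std_block :: 'n rmat2"
    have "- (?E ** G' ** ?E) = G'" using EG by (simp add: transpose_std_block neg_matrix_mult_left)
    then have "- (?E ** G' ** ?E) ** ?E = G' ** ?E" by simp
    then have "?E ** G' = G' ** ?E"
      by (simp add: matrix_mul_assoc[symmetric] std_block_sq neg_matrix_mult_left neg_matrix_mult_right)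
    then show ?thesis using commE_iff by metis
  qed
  have dG': "det G' \<noteq> 0"
  proof -
    have "det Si * det S = 1" using SSi by (metis det_I det_mul)
    then have "det Si \<noteq> 0" by auto
    moreover have "det G \<noteq> 0" using pd_det_nz[OF Gpd] .
    ultimately show ?thesis by (simp add: G'_def det_mul)
  qed
  have trsym: "G' ** tr X = transpose (tr X) ** G'" if "G ** X = transpose X ** G" for X
  proof -
    have "G' ** tr X = transpose Si ** (G ** X) ** Si"
      by (simp add: G'_def tr_def matrix_mul_assoc[symmetric] SSi')
    also have "\<dots> = transpose Si ** (transpose X ** G) ** Si" using that by simp
    also have "\<dots> = transpose (tr X) ** G'"
      by (simp add: G'_def tr_def matrix_mul_assoc[symmetric] matrix_transpose_mul trT')
    finally show ?thesis .
  qed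
  have cTr: "commE (tr X)" if "X ** J = J ** X" for X
  proof -
    have "tr X ** std_block = std_block ** tr X" using that by (metis tr_mult trJ)
    then show ?thesis by (simp add: commE_iff)
  qed
  define c where "c = cf (tr C)"
  define Ct where "Ct t = (1 - t) *\<^sub>R mat 1 + t *\<^sub>R C" for t :: real
  have trCt: "tr (Ct t) = (1 - t) *\<^sub>R mat 1 + t *\<^sub>R tr C" for t
    by (simp add: tr_def Ct_def matrix_add_ldistrib matrix_add_rdistrib matrix_scalar_ac
        scalar_matrix_assoc[symmetric] SSi)
  have cfCt: "cf (tr (Ct t)) = (1 - t) *\<^sub>R mat 1 + t *\<^sub>R c" for t
    by (simp add: trCt cf_add cf_scaleR cf_mat1 c_def)
  have CtJ: "Ct t ** J = J ** Ct t" for t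
    by (simp add: Ct_def matrix_add_rdistrib matrix_add_ldistrib CJ scalar_matrix_assoc[symmetric] matrix_scalar_ac)
  have GCt: "G ** Ct t = transpose (Ct t) ** G" for t
  proof -
    have "transpose C ** G = G ** C" using GCsym Gsym by (metis matrix_transpose_mul)
    then show ?thesis
      by (simp add: Ct_def matrix_add_rdistrib matrix_add_ldistrib transpose_add transpose_scalar
          transpose_mat scalar_matrix_assoc[symmetric] matrix_scalar_ac)
  qed
  have pdCt: "v \<bullet> ((G ** Ct t) *v v) > 0" if t: "0 \<le> t" "t \<le> 1" and v: "v \<noteq> 0" for t v
  proof -
    have eq: "v \<bullet> ((G ** Ct t) *v v) = (1 - t) * (v \<bullet> (G *v v)) + t * (v \<bullet> ((G ** C) *v v))"
      by (simp add: Ct_def matrix_add_ldistrib matrix_scalar_ac matrix_vector_mult_add_rdistrib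
          scalar_matrix_assoc[symmetric] scaleR_matrix_vector_assoc[symmetric] inner_add_right)
    have a: "v \<bullet> (G *v v) > 0" using Gpd v by blast
    have b: "v \<bullet> ((G ** C) *v v) > 0" using GCpd v by blast
    show ?thesis
    proof (cases "t = 1")
      case True then show ?thesis using eq b by simp
    next
      case False then have "1 - t > 0" using t by simp
      then show ?thesis unfolding eq using a b t by (simp add: add_pos_nonneg)
    qed
  qed
  have nz: "det (cf (tr (Ct t))) \<noteq> 0" and re: "cnj (det (cf (tr (Ct t)))) = det (cf (tr (Ct t)))"
    if t: "0 \<le> t" "t \<le> 1" for t
  proof -
    have "\<forall>x. Ct t *v x = 0 \<longrightarrow> x = 0"
    proof (intro allI impI)
      fix x assume "Ct t *v x = 0"
      then have "x \<bullet> ((G ** Ct t) *v x) = 0" by (simp flip: matrix_vector_mul_assoc)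
      then show "x = 0" using pdCt[OF t, of x] by (metis less_irrefl)
    qed
    then have "det (Ct t) \<noteq> 0" by (rule ker_det_nz)
    then have "det (tr (Ct t)) \<noteq> 0" using det_similar[OF SSi(2)] by (simp add: tr_def)
    then show "det (cf (tr (Ct t))) \<noteq> 0" using det_cf_real[OF cTr[OF CtJ]] by fastforce
    show "cnj (det (cf (tr (Ct t)))) = det (cf (tr (Ct t)))"
      by (rule det_cf_of_real[OF cTr[OF CtJ] cG' dG' trsym[OF GCt]])
  qed
  define f where "f t = Re (det ((1 - t) *\<^sub>R mat 1 + t *\<^sub>R c))" for t :: real
  have fcont: "continuous_on {0..1} f"
    unfolding f_def by (rule continuous_on_Re[OF continuous_on_subset[OF cont_det_path]]) simp
  have f0: "f 0 = 1" by (simp add: f_def)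
  have fnz: "f t \<noteq> 0" if "0 \<le> t" "t \<le> 1" for t
  proof -
    have "det (cf (tr (Ct t))) = complex_of_real (Re (det (cf (tr (Ct t)))))"
      using re[OF that] by (rule cnj_eq_real)
    then show ?thesis using nz[OF that] by (simp add: f_def cfCt) (metis of_real_0)
  qed
  have f1: "f 1 > 0"
  proof (rule ccontr)
    assume "\<not> f 1 > 0"
    then have "f 1 \<le> 0" by simp
    then obtain x where x: "0 \<le> x" "x \<le> 1" "f x = 0"
      using IVT2'[of f 1 0 0, OF _ _ _ fcont] f0 by auto
    then show False using fnz by blast
  qed
  have dc: "det c = complex_of_real (f 1)"
  proof -
    have "cnj (det c) = det c" using re[of 1] by (simp add: cfCt)
    then show ?thesis by (simp add: f_def) (rule cnj_eq_real)
  qed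
  have "det C = det (tr C)" using det_similar[OF SSi(2)] by (simp add: tr_def)
  also have "\<dots> = (cmod (det c))^2" unfolding c_def by (rule det_cf_real[OF cTr[OF CJ]])
  also have "\<dots> = (f 1)^2" using dc f1 by simp
  finally show ?thesis using f1 dc detbar_eq c_def by auto
qed

(* ---- part 8 ---- *)

definition l1m :: "real^'m^'m \<Rightarrow> real" where
  "l1m A = (\<Sum>i\<in>UNIV. \<Sum>j\<in>UNIV. \<bar>A$i$j\<bar>)"

lemma l1m_nonneg: "0 \<le> l1m A"
  by (simp add: l1m_def sum_nonneg)

lemma norm_le_l1m: "norm A \<le> l1m A"
proof -
  have "norm A = L2_set (\<lambda>i. norm (A$i)) UNIV" by (simp add: norm_vec_def)
  also have "\<dots> \<le> (\<Sum>i\<in>UNIV. norm (A$i))" by (rule L2_set_le_sum) simp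
  also have "\<dots> \<le> l1m A" unfolding l1m_def by (intro sum_mono norm_le_l1_cart)
  finally show ?thesis .
qed

lemma l1m_mult: "l1m (A ** B) \<le> l1m A * l1m B"
proof -
  have "l1m (A ** B) \<le> (\<Sum>i\<in>UNIV. \<Sum>j\<in>UNIV. \<Sum>k\<in>UNIV. \<bar>A$i$k\<bar> * \<bar>B$k$j\<bar>)"
  proof -
    have pw: "\<bar>(A ** B)$i$j\<bar> \<le> (\<Sum>k\<in>UNIV. \<bar>A$i$k\<bar> * \<bar>B$k$j\<bar>)" for i j
    proof -
      have "\<bar>(A ** B)$i$j\<bar> = \<bar>\<Sum>k\<in>UNIV. A$i$k * B$k$j\<bar>" by (simp add: matrix_matrix_mult_def)
      also have "\<dots> \<le> (\<Sum>k\<in>UNIV. \<bar>A$i$k * B$k$j\<bar>)" by (rule sum_abs)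
      finally show ?thesis by (simp add: abs_mult)
    qed
    show ?thesis unfolding l1m_def by (intro sum_mono pw)
  qed
  also have "\<dots> = (\<Sum>i\<in>UNIV. \<Sum>k\<in>UNIV. \<bar>A$i$k\<bar> * (\<Sum>j\<in>UNIV. \<bar>B$k$j\<bar>))"
  proof (rule sum.cong[OF refl])
    fix i
    have "(\<Sum>j\<in>UNIV. \<Sum>k\<in>UNIV. \<bar>A$i$k\<bar> * \<bar>B$k$j\<bar>) = (\<Sum>k\<in>UNIV. \<Sum>j\<in>UNIV. \<bar>A$i$k\<bar> * \<bar>B$k$j\<bar>)"
      by (rule sum.swap)
    then show "(\<Sum>j\<in>UNIV. \<Sum>k\<in>UNIV. \<bar>A$i$k\<bar> * \<bar>B$k$j\<bar>) = (\<Sum>k\<in>UNIV. \<bar>A$i$k\<bar> * (\<Sum>j\<in>UNIV. \<bar>B$k$j\<bar>))"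
      by (simp add: sum_distrib_left)
  qed
  also have "\<dots> \<le> (\<Sum>i\<in>UNIV. \<Sum>k\<in>UNIV. \<bar>A$i$k\<bar> * l1m B)"
  proof (intro sum_mono mult_left_mono)
    fix k show "(\<Sum>j\<in>UNIV. \<bar>B$k$j\<bar>) \<le> l1m B"
      unfolding l1m_def by (rule member_le_sum) (auto intro: sum_nonneg)
  qed simp
  also have "\<dots> = l1m A * l1m B" by (simp add: l1m_def sum_distrib_right)
  finally show ?thesis .
qed

lemma mpow_Suc_right: "mpow A (Suc k) = mpow A k ** A"
  by (induction k) (simp_all add: matrix_mul_assoc)

lemma mpow_add: "mpow A (m + n) = mpow A m ** mpow A n"
  by (induction m) (simp_all add: matrix_mul_assoc)

lemma mpow_double: "mpow A (2 * k) = mpow (A ** A) k"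
  by (induction k) (simp_all add: matrix_mul_assoc mpow_Suc_right)

lemma mpow_intertwine: "X ** A = B ** X \<Longrightarrow> X ** mpow A k = mpow B k ** X"
proof (induction k)
  case 0 then show ?case by simp
next
  case (Suc k)
  have "X ** mpow A (Suc k) = (X ** A) ** mpow A k" by (simp add: matrix_mul_assoc)
  also have "\<dots> = B ** (X ** mpow A k)" using Suc.prems by (simp add: matrix_mul_assoc)
  also have "\<dots> = mpow B (Suc k) ** X" using Suc by (simp add: matrix_mul_assoc)
  finally show ?case .
qed

lemma mpow_comm: "A ** mpow A n = mpow A n ** A"
  using mpow_Suc_right[of A n] by simp

lemma l1m_mpow: "l1m (mpow A k) \<le> l1m (mat 1 :: real^'m^'m) * l1m (A :: real^'m^'m) ^ k"
proof (induction k)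
  case 0 then show ?case by simp
next
  case (Suc k)
  have "l1m (mpow A (Suc k)) \<le> l1m A * l1m (mpow A k)" using l1m_mult by simp
  also have "\<dots> \<le> l1m A * (l1m (mat 1 :: real^'m^'m) * l1m A ^ k)"
    using Suc l1m_nonneg by (intro mult_left_mono) auto
  finally show ?case by (simp add: algebra_simps)
qed

lemma summable_mcosh: "summable (\<lambda>k. (1 / fact (2 * k)) *\<^sub>R mpow (K::real^'m^'m) (2 * k))"
proof (rule summable_comparison_test')
  let ?L = "l1m (mat 1 :: real^'m^'m)" and ?a = "l1m K"
  show "summable (\<lambda>k. ?L * (inverse (fact k) * (?a^2) ^ k))"
    by (intro summable_mult summable_exp)
  fix k :: nat
  have "norm ((1 / fact (2 * k)) *\<^sub>R mpow K (2 * k)) = (1 / fact (2 * k)) * norm (mpow K (2 * k))"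
    by simp
  also have "\<dots> \<le> (1 / fact (2 * k)) * (?L * ?a ^ (2 * k))"
    by (intro mult_left_mono order_trans[OF norm_le_l1m l1m_mpow]) simp
  also have "\<dots> \<le> (1 / fact k) * (?L * ?a ^ (2 * k))"
  proof (intro mult_right_mono)
    show "1 / fact (2 * k) \<le> (1 / fact k :: real)"
      by (intro divide_left_mono) (auto simp: fact_mono)
    show "0 \<le> ?L * ?a ^ (2 * k)" by (intro mult_nonneg_nonneg zero_le_power l1m_nonneg)
  qed
  also have "\<dots> = ?L * (inverse (fact k) * (?a^2) ^ k)"
  proof -
    have e: "?a ^ (2 * k) = (?a^2)^k" by (simp add: power_mult)
    show ?thesis by (simp only: e) (simp add: divide_inverse)
  qed
  finally show "norm ((1 / fact (2 * k)) *\<^sub>R mpow K (2 * k)) \<le> ?L * (inverse (fact k) * (?a^2) ^ k)" .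
qed

lemma mcosh_sums: "(\<lambda>k. (1 / fact (2 * k)) *\<^sub>R mpow K (2 * k)) sums mcosh K"
  unfolding mcosh_def by (rule summable_sums[OF summable_mcosh])

lemma mcosh_linear_sums:
  fixes L :: "real^'m^'m \<Rightarrow> 'b::euclidean_space"
  assumes "linear L"
  shows "(\<lambda>k. (1 / fact (2 * k)) *\<^sub>R L (mpow K (2 * k))) sums L (mcosh K)"
proof -
  have "bounded_linear L" using assms linear_conv_bounded_linear by auto
  from bounded_linear.sums[OF this mcosh_sums[of K]]
  show ?thesis using assms by (simp add: linear_scale)
qed

lemma linear_mult_right: "linear (\<lambda>X::real^'m^'m. X ** J)"
  by (rule linearI) (simp_all add: matrix_add_rdistrib scalar_matrix_assoc)

lemma linear_mult_left: "linear (\<lambda>X::real^'m^'m. J ** X)"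
  by (rule linearI) (simp_all add: matrix_add_ldistrib matrix_scalar_ac scalar_matrix_assoc)

lemma linear_transpose: "linear (\<lambda>X::real^'m^'m. transpose X)"
  by (rule linearI) (simp_all add: transpose_add transpose_scalar)

lemma linear_mv: "linear (\<lambda>X::real^'m^'m. X *v v)"
  by (rule linearI) (simp_all add: matrix_vector_mult_add_rdistrib scaleR_matrix_vector_assoc)

lemma linear_quad: "linear (\<lambda>X::real^'m^'m. w \<bullet> (X *v v))"
  by (rule linearI) (simp_all add: matrix_vector_mult_add_rdistrib scaleR_matrix_vector_assoc[symmetric] inner_add_right)

lemma mcosh_intertwine:
  fixes X A B :: "real^'m^'m"
  assumes "X ** (A ** A) = (B ** B) ** X"
  shows "X ** mcosh A = mcosh B ** X"
proof -
  have s1: "(\<lambda>k. (1 / fact (2 * k)) *\<^sub>R (X ** mpow A (2 * k))) sums (X ** mcosh A)"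
    using mcosh_linear_sums[OF linear_mult_left] .
  have s2: "(\<lambda>k. (1 / fact (2 * k)) *\<^sub>R (mpow B (2 * k) ** X)) sums (mcosh B ** X)"
    using mcosh_linear_sums[OF linear_mult_right] .
  have "X ** mpow A (2 * k) = mpow B (2 * k) ** X" for k
    using mpow_intertwine[OF assms] by (simp add: mpow_double)
  then show ?thesis using s1 s2 by (simp add: sums_unique2)
qed

lemma mcosh_transpose: "transpose (mcosh A) = mcosh (transpose (A::real^'m^'m))"
proof -
  have s1: "(\<lambda>k. (1 / fact (2 * k)) *\<^sub>R transpose (mpow A (2 * k))) sums transpose (mcosh A)"
    using mcosh_linear_sums[OF linear_transpose] .
  have "transpose (mpow A n) = mpow (transpose A) n" for n
  proof (induction n)
    case 0 then show ?case by (simp add: transpose_mat)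
  next
    case (Suc n) then show ?case by (simp add: matrix_transpose_mul mpow_Suc_right mpow_comm)
  qed
  then show ?thesis using s1 mcosh_sums[of "transpose A"] by (simp add: sums_unique2)
qed

(* ---- part 9 ---- *)

lemma mpow_transpose: "transpose (mpow A n) = mpow (transpose A) n"
proof (induction n)
  case 0 then show ?case by (simp add: transpose_mat)
next
  case (Suc n) then show ?case by (simp add: matrix_transpose_mul mpow_Suc_right mpow_comm)
qed

lemma inner_transpose_mv: "x \<bullet> (transpose A *v y) = (A *v x) \<bullet> (y :: real^'n)"
  by (metis dot_lmul_matrix vector_transpose_matrix)

lemma transpose_neg: "transpose (- A) = - transpose (A::'a::ring_1^'n^'m)"
  by (simp add: vec_eq_iff transpose_def)

lemma mm_assoc_r: "A ** B ** C = A ** (B ** C)"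
  by (simp add: matrix_mul_assoc)

lemma bosonic_hyps:
  fixes J K :: "'n::finite rmat2"
  assumes bJ: "bosonic_cs J" and K: "K \<in> u_perp sp_alg J"
  defines "H \<equiv> - (Omega ** J)"
  shows "transpose H = H" "\<forall>v. v \<noteq> 0 \<longrightarrow> v \<bullet> (H *v v) > 0" "transpose J ** H ** J = H"
    "transpose (H ** mcosh K) = H ** mcosh K" "\<forall>v. v \<noteq> 0 \<longrightarrow> v \<bullet> ((H ** mcosh K) *v v) > 0"
proof -
  let ?O = "Omega :: 'n rmat2"
  have JJ: "J ** J = - mat 1" and JOJ: "J ** ?O ** transpose J = ?O"
    and G0pd: "\<forall>v. v \<noteq> 0 \<longrightarrow> v \<bullet> ((- (J ** ?O)) *v v) > 0"
    using bJ by (auto simp: bosonic_cs_def)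
  have KO: "K ** ?O = - (?O ** transpose K)" and KJ: "K ** J = - (J ** K)"
    using K by (auto simp: u_perp_def sp_alg_def)
  note OO = std_block_sq[where 'n='n] and OT = transpose_std_block[where 'n='n]
  note neg = neg_matrix_mult_left neg_matrix_mult_right
  have OO': "?O ** (?O ** X) = - X" for X :: "'n rmat2" by (simp add: matrix_mul_assoc OO neg)
  have JT: "transpose J = ?O ** J ** ?O"
  proof -
    have "J ** (J ** ?O ** transpose J) = J ** ?O" using JOJ by simp
    then have "- (?O ** transpose J) = J ** ?O" by (simp add: matrix_mul_assoc JJ neg)
    then have "?O ** (- (?O ** transpose J)) = ?O ** (J ** ?O)" by simp
    then show ?thesis by (simp add: matrix_mul_assoc OO neg)
  qed
  have JTO: "transpose J ** ?O = - (?O ** J)"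
    by (simp add: JT mm_assoc_r OO neg)
  show Hsym: "transpose H = H"
    by (simp add: H_def matrix_transpose_mul OT neg JTO transpose_neg)
  have G0H: "(- (J ** ?O)) ** H = mat 1"
    by (simp add: H_def neg mm_assoc_r) (simp add: matrix_mul_assoc[of _ ?O] OO neg JJ)
  show "\<forall>v. v \<noteq> 0 \<longrightarrow> v \<bullet> (H *v v) > 0"
  proof (intro allI impI)
    fix v :: "real^('n+'n)" assume v: "v \<noteq> 0"
    define w where "w = H *v v"
    have Gw: "(- (J ** ?O)) *v w = v" by (simp add: w_def matrix_vector_mul_assoc G0H)
    then have "w \<noteq> 0" using v by auto
    then have "w \<bullet> ((- (J ** ?O)) *v w) > 0" using G0pd by blast
    then show "v \<bullet> (H *v v) > 0" using Gw by (simp add: w_def inner_commute)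
  qed
  show "transpose J ** H ** J = H"
    by (simp add: H_def neg mm_assoc_r JJ) (simp add: matrix_mul_assoc JTO neg)
  have KT: "transpose K = ?O ** K ** ?O"
  proof -
    have "?O ** (K ** ?O) = ?O ** (- (?O ** transpose K))" using KO by simp
    then show ?thesis by (simp add: matrix_mul_assoc OO neg)
  qed
  have HK: "H ** K = transpose K ** H"
  proof -
    have "H ** K = ?O ** K ** J" by (simp add: H_def neg mm_assoc_r KJ)
    also have "\<dots> = transpose K ** H" by (simp add: KT H_def neg mm_assoc_r OO')
    finally show ?thesis .
  qed
  have HKK: "H ** (K ** K) = (transpose K ** transpose K) ** H"
    by (simp add: matrix_mul_assoc HK) (simp add: mm_assoc_r HK)
  have HC: "H ** mcosh K = mcosh (transpose K) ** H" by (rule mcosh_intertwine[OF HKK])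
  show "transpose (H ** mcosh K) = H ** mcosh K"
    by (simp add: matrix_transpose_mul Hsym mcosh_transpose HC)
  show "\<forall>v. v \<noteq> 0 \<longrightarrow> v \<bullet> ((H ** mcosh K) *v v) > 0"
  proof (intro allI impI)
    fix v :: "real^('n+'n)" assume v: "v \<noteq> 0"
    have Hpd: "v \<bullet> (H *v v) > 0" using \<open>\<forall>v. v \<noteq> 0 \<longrightarrow> v \<bullet> (H *v v) > 0\<close> v by blast
    have lin: "linear (\<lambda>X. v \<bullet> ((H ** X) *v v))"
      by (rule linearI) (simp_all add: matrix_add_ldistrib matrix_vector_mult_add_rdistrib inner_add_right
          matrix_scalar_ac scalar_matrix_assoc[symmetric] scaleR_matrix_vector_assoc[symmetric])
    have sm: "(\<lambda>k. (1 / fact (2 * k)) *\<^sub>R (v \<bullet> ((H ** mpow K (2 * k)) *v v))) sums (v \<bullet> ((H ** mcosh K) *v v))"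
      by (rule mcosh_linear_sums[OF lin])
    have tk: "v \<bullet> ((H ** mpow K (2 * k)) *v v) = (mpow K k *v v) \<bullet> (H *v (mpow K k *v v))" for k
    proof -
      have eq: "H ** mpow K (2 * k) = transpose (mpow K k) ** H ** mpow K k"
        using mpow_add[of K k k] mpow_intertwine[OF HK, of k]
        by (simp add: mult_2 matrix_mul_assoc mpow_transpose)
      show ?thesis by (simp only: eq matrix_vector_mul_assoc[symmetric] inner_transpose_mv)
    qed
    have nn: "0 \<le> (1 / fact (2 * k)) *\<^sub>R (v \<bullet> ((H ** mpow K (2 * k)) *v v))" for k
    proof -
      have "0 \<le> (mpow K k *v v) \<bullet> (H *v (mpow K k *v v))"
        using \<open>\<forall>v. v \<noteq> 0 \<longrightarrow> v \<bullet> (H *v v) > 0\<close> by (metis inner_zero_left less_eq_real_def matrix_vector_mult_0_right order_refl)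
      then show ?thesis by (simp add: tk)
    qed
    have p0: "0 < (1 / fact (2 * 0)) *\<^sub>R (v \<bullet> ((H ** mpow K (2 * 0)) *v v))"
      using Hpd by simp
    show "v \<bullet> ((H ** mcosh K) *v v) > 0"
      using suminf_pos2[OF sums_summable[OF sm] nn p0] sums_unique[OF sm] by simp
  qed
qed

(* ---- part 10 ---- *)

lemma quad_zero:
  fixes a d :: real
  assumes h: "\<And>s. 2 * s * a \<le> s^2 * d"
  shows "a = 0"
proof -
  define e where "e = \<bar>d\<bar> + 1"
  have e: "e > 0" by (simp add: e_def add_nonneg_pos)
  have "2 * (a / e) * a \<le> (a / e)^2 * d" by (rule h)
  then have "2 * (a / e) * a * e^2 \<le> (a / e)^2 * d * e^2" using e by (intro mult_right_mono) auto
  then have h1: "2 * a^2 * e \<le> a^2 * d" using e by (simp add: power2_eq_square field_simps)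
  have "a^2 * d \<le> a^2 * (e - 1)" by (intro mult_left_mono) (auto simp: e_def)
  with h1 have "a^2 * (e + 1) \<le> 0" by (simp add: algebra_simps)
  moreover have "e + 1 > 0" using e by simp
  ultimately have "a^2 \<le> 0" by (simp add: mult_le_0_iff)
  then show ?thesis by simp
qed

lemma rayleigh_eig:
  fixes M :: "real^'m^'m" and W :: "(real^'m) set"
  assumes sym: "\<And>x y. x \<bullet> (M *v y) = y \<bullet> (M *v x)"
    and W: "subspace W" "W \<noteq> {0}" and inv: "\<And>x. x \<in> W \<Longrightarrow> M *v x \<in> W"
  shows "\<exists>w\<in>W. norm w = 1 \<and> M *v w = (w \<bullet> (M *v w)) *\<^sub>R w"
proof -
  let ?q = "\<lambda>x. x \<bullet> (M *v x)"
  let ?S = "sphere 0 1 \<inter> W"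
  have cS: "compact ?S" by (rule compact_Int_closed[OF compact_sphere closed_subspace[OF W(1)]])
  obtain x0 where x0: "x0 \<in> W" "x0 \<noteq> 0" using W subspace_0 by blast
  have "(1 / norm x0) *\<^sub>R x0 \<in> ?S" using x0 W(1) by (simp add: subspace_scale)
  then have nS: "?S \<noteq> {}" by blast
  have cq: "continuous_on ?S ?q"
    by (intro continuous_intros matrix_vector_mult_linear_continuous_on)
  obtain w where w: "w \<in> ?S" and wmax: "\<And>y. y \<in> ?S \<Longrightarrow> ?q y \<le> ?q w"
    using continuous_attains_sup[OF cS nS cq] by blast
  define \<mu> where "\<mu> = ?q w"
  have wW: "w \<in> W" and nw: "norm w = 1" using w by auto
  have ww: "w \<bullet> w = 1" using nw by (simp add: dot_square_norm)
  have bound: "?q x \<le> \<mu> * (x \<bullet> x)" if x: "x \<in> W" for x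
  proof (cases "x = 0")
    case True then show ?thesis by simp
  next
    case False
    define y where "y = (1 / norm x) *\<^sub>R x"
    have "y \<in> ?S" using x False W(1) by (simp add: y_def subspace_scale)
    then have "?q y \<le> \<mu>" using wmax \<mu>_def by simp
    moreover have "?q y = ?q x / (x \<bullet> x)"
      by (simp add: y_def matrix_vector_mult_scaleR dot_square_norm power2_eq_square)
    moreover have "x \<bullet> x > 0" using False by simp
    ultimately show ?thesis by (simp add: divide_le_eq mult.commute)
  qed
  have orth: "u \<bullet> (M *v w) = 0" if u: "u \<in> W" "u \<bullet> w = 0" for u
  proof -
    let ?a = "u \<bullet> (M *v w)" and ?b = "?q u"
    have "2 * s * ?a \<le> s^2 * (\<mu> * (u \<bullet> u) - ?b)" for s
    proof -
      have xW: "w + s *\<^sub>R u \<in> W" using u wW W(1) by (simp add: subspace_add subspace_scale)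
      have "?q (w + s *\<^sub>R u) = \<mu> + 2 * s * ?a + s^2 * ?b"
        using sym[of w u]
        by (simp add: \<mu>_def matrix_vector_right_distrib matrix_vector_mult_scaleR inner_add_left
            inner_add_right power2_eq_square algebra_simps)
      moreover have "(w + s *\<^sub>R u) \<bullet> (w + s *\<^sub>R u) = 1 + s^2 * (u \<bullet> u)"
        using u(2) ww by (simp add: inner_add_left inner_add_right inner_commute power2_eq_square algebra_simps)
      ultimately show ?thesis using bound[OF xW] by (simp add: algebra_simps)
    qed
    then show ?thesis by (rule quad_zero)
  qed
  define u where "u = M *v w - \<mu> *\<^sub>R w"
  have uW: "u \<in> W" using inv[OF wW] wW W(1) by (simp add: u_def subspace_diff subspace_scale)
  have uw: "u \<bullet> w = 0" using ww by (simp add: u_def inner_diff_left inner_diff_right \<mu>_def inner_commute)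
  have "u \<bullet> u = u \<bullet> (M *v w) - \<mu> * (u \<bullet> w)" by (simp add: u_def inner_diff_right)
  also have "\<dots> = 0" using orth[OF uW uw] uw by simp
  finally have "u = 0" by simp
  then show ?thesis using wW nw by (intro bexI[of _ w]) (auto simp: u_def \<mu>_def)
qed

lemma pd_from_eig:
  fixes M C :: "real^'m^'m"
  assumes Msym: "\<And>x y. x \<bullet> (M *v y) = y \<bullet> (M *v x)"
    and Csym: "\<And>x y. x \<bullet> (C *v y) = y \<bullet> (C *v x)"
    and eig: "\<And>w \<mu>. w \<noteq> 0 \<Longrightarrow> M *v w = \<mu> *\<^sub>R w \<Longrightarrow> \<exists>l>0. C *v w = l *\<^sub>R w"
  shows "\<forall>v. v \<noteq> 0 \<longrightarrow> v \<bullet> (C *v v) > 0"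
proof -
  have main: "\<And>W. subspace W \<Longrightarrow> (\<forall>x\<in>W. M *v x \<in> W) \<Longrightarrow> dim W = n \<Longrightarrow>
      (\<forall>v\<in>W. v \<noteq> 0 \<longrightarrow> v \<bullet> (C *v v) > 0)" for n
  proof (induction n rule: less_induct)
    case (less n W)
    show ?case
    proof (intro ballI impI)
      fix v assume vW: "v \<in> W" and v0: "v \<noteq> 0"
      have Wne: "W \<noteq> {0}" using vW v0 by blast
      obtain w where wW: "w \<in> W" and nw: "norm w = 1" and Mw: "M *v w = (w \<bullet> (M *v w)) *\<^sub>R w"
        using rayleigh_eig[OF Msym less.prems(1) Wne] less.prems(2) by blast
      have w0: "w \<noteq> 0" using nw by auto
      obtain l where l: "l > 0" "C *v w = l *\<^sub>R w" using eig[OF w0 Mw] by blast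
      have ww: "w \<bullet> w = 1" using nw by (simp add: dot_square_norm)
      define W' where "W' = {x \<in> W. x \<bullet> w = 0}"
      have sW': "subspace W'"
        using less.prems(1) unfolding W'_def subspace_def by (auto simp: inner_add_left)
      have iW': "\<forall>x\<in>W'. M *v x \<in> W'"
      proof
        fix x assume x: "x \<in> W'"
        have "(M *v x) \<bullet> w = x \<bullet> (M *v w)" using Msym[of w x] by (simp add: inner_commute)
        also have "\<dots> = 0" using x by (subst Mw) (simp add: W'_def)
        finally show "M *v x \<in> W'" using x less.prems(2) by (simp add: W'_def)
      qed
      have "dim W' < dim W"
      proof (rule eucl.dim_psubset)
        have e1: "span W' = W'" using sW' by (simp add: span_eq_iff)
        have e2: "span W = W" using less.prems(1) by (simp add: span_eq_iff)
        have "W' \<subset> W"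
        proof -
          have "w \<notin> W'" using ww by (simp add: W'_def)
          have sub: "W' \<subseteq> W" by (auto simp: W'_def)
          have ne: "W' \<noteq> W" using wW \<open>w \<notin> W'\<close> by blast
          show ?thesis using sub ne by (rule psubsetI)
        qed
        then show "span W' \<subset> span W" unfolding e1 e2 .
      qed
      then have IH: "\<forall>x\<in>W'. x \<noteq> 0 \<longrightarrow> x \<bullet> (C *v x) > 0"
        using less.IH[OF _ sW' iW' refl] less.prems(3) by blast
      define a where "a = v \<bullet> w"
      define v' where "v' = v - a *\<^sub>R w"
      have v'W: "v' \<in> W'" using vW wW less.prems(1) ww
        by (simp add: W'_def v'_def a_def subspace_diff subspace_scale inner_diff_left)
      have v'w: "v' \<bullet> w = 0" using v'W by (simp add: W'_def)
      have vdec: "v = v' + a *\<^sub>R w" by (simp add: v'_def)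
      have c1: "v' \<bullet> (C *v w) = 0" using v'w l by simp
      have c2: "w \<bullet> (C *v v') = 0" using c1 Csym[of w v'] by simp
      have c3: "w \<bullet> (C *v w) = l" using l ww by simp
      have "v \<bullet> (C *v v) = v' \<bullet> (C *v v') + a^2 * l"
        unfolding vdec using c1 c2 c3
        by (simp add: matrix_vector_right_distrib matrix_vector_mult_scaleR inner_add_left inner_add_right
            power2_eq_square algebra_simps)
      moreover have "v' \<bullet> (C *v v') + a^2 * l > 0"
      proof (cases "v' = 0")
        case True
        then have "a \<noteq> 0" using v0 vdec by auto
        then show ?thesis using True l by simp
      next
        case False
        then have "v' \<bullet> (C *v v') > 0" using IH v'W by blast
        then show ?thesis using l by (simp add: add_pos_nonneg)
      qed
      ultimately show "v \<bullet> (C *v v) > 0" by simp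
    qed
  qed
  show ?thesis using main[OF subspace_UNIV _ refl] by simp
qed

(* ---- part 11 ---- *)

definition cvec :: "real^'m \<Rightarrow> complex^'m" where
  "cvec x = (\<chi> i. complex_of_real (x$i))"

lemma cmat_cvec: "cmat A *v cvec x = cvec (A *v x)"
  by (simp add: vec_eq_iff cmat_def cvec_def matrix_vector_mult_def of_real_sum)

lemma cvec_eq0: "cvec x = 0 \<longleftrightarrow> x = 0"
  by (simp add: vec_eq_iff cvec_def)

lemma cvec_scaleR: "cvec (r *\<^sub>R x) = complex_of_real r *s cvec x"
  by (simp add: vec_eq_iff cvec_def)

lemma mat_mv: "mat c *v x = c *s (x::'a::comm_ring_1^'m)"
  by (simp add: vec_eq_iff matrix_vector_mult_def mat_def if_times_gen)

lemma singular_det: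
  fixes B :: "complex^'m^'m"
  assumes "B *v x = 0" "x \<noteq> 0"
  shows "det B = 0"
proof (rule ccontr)
  assume "det B \<noteq> 0"
  then have "invertible B" by (simp add: invertible_det_nz)
  then have "inj ((*v) B)" by (rule inj_matrix_vector_mult)
  moreover have "B *v x = B *v 0" using assms by simp
  ultimately have "x = 0" by (rule injD)
  then show False using assms(2) by simp
qed

lemma ferm_eigen:
  fixes K :: "real^'m^'m"
  assumes KT: "transpose K = - K" and ev: "\<forall>c\<in>eigenvalues K. cmod c < pi / 2"
    and w: "w \<noteq> 0" and Mw: "(transpose K ** K) *v w = \<mu> *\<^sub>R w"
  shows "mcosh K *v w = cos (sqrt \<mu>) *\<^sub>R w \<and> cos (sqrt \<mu>) > 0"
proof -
  have "- ((K ** K) *v w) = \<mu> *\<^sub>R w"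
    using Mw KT by (simp add: neg_matrix_mult_left neg_matrix_vector)
  then have KK: "(K ** K) *v w = (- \<mu>) *\<^sub>R w"
    by (metis minus_minus scaleR_minus_left)
  have "w \<bullet> ((transpose K ** K) *v w) = (K *v w) \<bullet> (K *v w)"
    by (simp only: matrix_vector_mul_assoc[symmetric] inner_transpose_mv)
  then have "\<mu> * (w \<bullet> w) \<ge> 0" using Mw by simp
  moreover have "w \<bullet> w > 0" using w by simp
  ultimately have mu0: "\<mu> \<ge> 0" by (simp add: zero_le_mult_iff)
  define s where "s = sqrt \<mu>"
  have s0: "s \<ge> 0" using mu0 by (simp add: s_def)
  have ss: "s * s = \<mu>" using mu0 by (simp add: s_def)
  have pw: "mpow K (2 * k) *v w = (- \<mu>) ^ k *\<^sub>R w" for k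
  proof -
    have "mpow (K ** K) k *v w = (- \<mu>) ^ k *\<^sub>R w"
    proof (induction k)
      case 0 then show ?case by simp
    next
      case (Suc k)
      have "mpow (K ** K) (Suc k) *v w = (K ** K) *v (mpow (K ** K) k *v w)"
        by (simp add: matrix_vector_mul_assoc)
      also have "\<dots> = (- \<mu>) ^ Suc k *\<^sub>R w" using Suc KK by (simp add: matrix_vector_mult_scaleR)
      finally show ?case .
    qed
    then show ?thesis by (simp add: mpow_double)
  qed
  have s1: "(\<lambda>k. (1 / fact (2 * k)) *\<^sub>R (mpow K (2 * k) *v w)) sums (mcosh K *v w)"
    by (rule mcosh_linear_sums[OF linear_mv])
  have s2: "(\<lambda>k. ((- 1) ^ k / fact (2 * k) * s ^ (2 * k)) *\<^sub>R w) sums (cos s *\<^sub>R w)"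
    by (rule sums_scaleR_left[OF cos_paired])
  have eqt: "(1 / fact (2 * k)) *\<^sub>R (mpow K (2 * k) *v w) = ((- 1) ^ k / fact (2 * k) * s ^ (2 * k)) *\<^sub>R w" for k
  proof -
    have s2e: "s^2 = \<mu>" using mu0 by (simp add: s_def)
    have e1: "s ^ (2 * k) = \<mu> ^ k" by (simp only: power_mult s2e)
    have e2: "(- \<mu>) ^ k = (- 1) ^ k * \<mu> ^ k" by (rule power_minus)
    show ?thesis unfolding pw e1 e2 scaleR_scaleR by (simp add: field_simps)
  qed
  have fe: "(\<lambda>k. (1 / fact (2 * k)) *\<^sub>R (mpow K (2 * k) *v w)) = (\<lambda>k. ((- 1) ^ k / fact (2 * k) * s ^ (2 * k)) *\<^sub>R w)"
    by (rule ext) (rule eqt)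
  have C: "mcosh K *v w = cos s *\<^sub>R w"
    using s1 s2 unfolding fe by (rule sums_unique2)
  \<comment> \<open>an eigenvalue of modulus s\<close>
  define c where "c = \<i> * complex_of_real s"
  have cc: "c * c = - complex_of_real \<mu>"
  proof -
    have "c * c = (\<i> * \<i>) * (complex_of_real s * complex_of_real s)" unfolding c_def by (simp only: mult_ac)
    also have "\<dots> = - complex_of_real \<mu>" by (simp flip: ss)
    finally show ?thesis .
  qed
  have cm: "cmod c = s" using s0 by (simp add: c_def norm_mult)
  define A where "A = cmat K"
  define cv where "cv = cvec w"
  have cv0: "cv \<noteq> 0" using w by (simp add: cv_def cvec_eq0)
  define u where "u = A *v cv"
  have Au: "A *v u = - (complex_of_real \<mu> *s cv)"
  proof -
    have "A *v u = cvec ((K ** K) *v w)" by (simp add: u_def A_def cv_def cmat_cvec matrix_vector_mul_assoc)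
    also have "\<dots> = - (complex_of_real \<mu> *s cv)" by (simp add: KK cv_def vec_eq_iff cvec_def)
    finally show ?thesis .
  qed
  have "\<exists>c'. cmod c' = s \<and> det (mat c' - cmat K) = 0"
  proof (cases "u + c *s cv = 0")
    case False
    have z1: "(mat c - A) *v (u + c *s cv) = c *s (u + c *s cv) - A *v (u + c *s cv)"
      by (simp only: matrix_vector_mult_diff_rdistrib mat_mv)
    have z2: "A *v (u + c *s cv) = A *v u + c *s (A *v cv)"
      by (simp only: matrix_vector_right_distrib vector_scalar_commute)
    have "(mat c - A) *v (u + c *s cv) = c *s (u + c *s cv) - (A *v u + c *s (A *v cv))"
      unfolding z1 z2 ..
    also have "\<dots> = c *s (u + c *s cv) - (- (complex_of_real \<mu> *s cv) + c *s u)"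
      by (simp only: Au flip: u_def)
    also have "\<dots> = 0"
    proof (rule vec_eq_iff[THEN iffD2], rule allI)
      fix i
      have "(c *s (u + c *s cv) - (- (complex_of_real \<mu> *s cv) + c *s u)) $ i = (c * c + complex_of_real \<mu>) * cv$i"
        by (simp add: algebra_simps)
      then show "(c *s (u + c *s cv) - (- (complex_of_real \<mu> *s cv) + c *s u)) $ i = 0 $ i" using cc by simp
    qed
    finally have "(mat c - A) *v (u + c *s cv) = 0" .
    then have "det (mat c - cmat K) = 0" using False by (simp add: singular_det A_def)
    then show ?thesis using cm by blast
  next
    case True
    then have uc: "u = - (c *s cv)" by (simp add: eq_neg_iff_add_eq_0)
    have "(mat (- c) - A) *v cv = (- c) *s cv - u"
      by (simp only: matrix_vector_mult_diff_rdistrib mat_mv u_def)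
    also have "\<dots> = 0" by (simp add: uc vec_eq_iff)
    finally have "(mat (- c) - A) *v cv = 0" .
    then have "det (mat (- c) - cmat K) = 0" using cv0 by (simp add: singular_det A_def)
    then show ?thesis using cm by (intro exI[of _ "- c"]) simp
  qed
  then obtain c' where "cmod c' = s" "c' \<in> eigenvalues K" by (auto simp: eigenvalues_def)
  then have "s < pi / 2" using ev by auto
  then have "cos s > 0" using s0 by (intro cos_gt_zero_pi) auto
  then show ?thesis using C by (simp add: s_def)
qed

(* ---- part 12 ---- *)

lemma mcosh_neg: "mcosh (- K) = mcosh (K::real^'m^'m)"
proof -
  have "mpow (- K) (2 * k) = mpow K (2 * k)" for k
    by (simp add: mpow_double neg_matrix_mult_left neg_matrix_mult_right)
  then show ?thesis by (simp add: mcosh_def)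
qed

theorem lemma6:
  fixes J K :: "'n::finite rmat2"
  assumes "(bosonic_cs J \<and> K \<in> u_perp sp_alg J) \<or> (fermionic_cs J \<and> K \<in> I_u_perp so_alg J)"
  shows "mcosh K ** J = J ** mcosh K \<and>
         detbar J (mcosh K) = complex_of_real (sqrt (det (mcosh K))) \<and>
         sqrt (det (mcosh K)) > 0"
proof -
  have JJ: "J ** J = - mat 1" using assms by (auto simp: bosonic_cs_def fermionic_cs_def)
  have KJ: "K ** J = - (J ** K)" using assms by (auto simp: u_perp_def I_u_perp_def)
  have CJ: "mcosh K ** J = J ** mcosh K"
  proof -
    have "J ** (K ** K) = (J ** K) ** K" by (simp add: matrix_mul_assoc)
    also have "\<dots> = - (K ** (J ** K))" using KJ by (simp add: neg_matrix_mult_left matrix_mul_assoc)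
    also have "\<dots> = (K ** K) ** J" using KJ by (simp add: neg_matrix_mult_right flip: matrix_mul_assoc)
    finally have "J ** (K ** K) = (K ** K) ** J" .
    then have "J ** mcosh K = mcosh K ** J" by (rule mcosh_intertwine)
    then show ?thesis by simp
  qed
  obtain r where r: "r > 0" "detbar J (mcosh K) = complex_of_real r" "det (mcosh K) = r^2"
  proof (cases "bosonic_cs J \<and> K \<in> u_perp sp_alg J")
    case True
    note h = bosonic_hyps[OF conjunct1[OF True] conjunct2[OF True]]
    show ?thesis using core[OF JJ h(1) h(2) h(3) CJ h(4) h(5)] that by blast
  next
    case False
    then have F: "fermionic_cs J" "K \<in> I_u_perp so_alg J" using assms by auto
    have JTJ: "transpose J ** J = mat 1" using F by (simp add: fermionic_cs_def)
    have KT: "transpose K = - K" and ev: "\<forall>c\<in>eigenvalues K. cmod c < pi / 2"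
      using F by (auto simp: I_u_perp_def u_perp_def so_alg_def)
    have CT: "transpose (mcosh K) = mcosh K"
      by (simp add: mcosh_transpose KT mcosh_neg)
    let ?M = "transpose K ** K"
    have Msym: "x \<bullet> (?M *v y) = y \<bullet> (?M *v x)" for x y
    proof -
      have "x \<bullet> (?M *v y) = (K *v x) \<bullet> (K *v y)"
        by (simp only: matrix_vector_mul_assoc[symmetric] inner_transpose_mv)
      moreover have "y \<bullet> (?M *v x) = (K *v y) \<bullet> (K *v x)"
        by (simp only: matrix_vector_mul_assoc[symmetric] inner_transpose_mv)
      ultimately show ?thesis by (simp add: inner_commute)
    qed
    have Csym: "x \<bullet> (mcosh K *v y) = y \<bullet> (mcosh K *v x)" for x y
    proof -
      have "x \<bullet> (mcosh K *v y) = x \<bullet> (transpose (mcosh K) *v y)" by (simp only: CT)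
      also have "\<dots> = (mcosh K *v x) \<bullet> y" by (rule inner_transpose_mv)
      finally show ?thesis by (simp add: inner_commute)
    qed
    have eig: "\<exists>l>0. mcosh K *v w = l *\<^sub>R w" if "w \<noteq> 0" "?M *v w = \<mu> *\<^sub>R w" for w \<mu>
      using ferm_eigen[OF KT ev that] by blast
    have Cpd: "\<forall>v. v \<noteq> 0 \<longrightarrow> v \<bullet> (mcosh K *v v) > 0"
      by (rule pd_from_eig[OF Msym Csym eig])
    have h1: "transpose (mat 1 :: 'n rmat2) = mat 1" by (rule transpose_mat)
    have h2: "\<forall>v. v \<noteq> 0 \<longrightarrow> v \<bullet> ((mat 1 :: 'n rmat2) *v v) > 0" by simp
    have h3: "transpose J ** mat 1 ** J = mat 1" using JTJ by simp
    have h4: "transpose (mat 1 ** mcosh K) = mat 1 ** mcosh K" using CT by simp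
    have h5: "\<forall>v. v \<noteq> 0 \<longrightarrow> v \<bullet> ((mat 1 ** mcosh K) *v v) > 0" using Cpd by simp
    show ?thesis using core[OF JJ h1 h2 h3 CJ h4 h5] that by blast
  qed
  have "sqrt (det (mcosh K)) = r" using r by simp
  then show ?thesis using CJ r by simp
qed

end
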